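(* Let $(G,M,\Delta)$ be a Garside structure and $(H,N,\delta)$ a parabolic substructure. Put $\omega=\delta^{-1}\Delta$ and $\Phi(\alpha)=\Delta\alpha\Delta^{-1}$. Let $c\in M$ be $N$-reduced, let $k\ge0$ be an integer, and let $d=\omega_1\omega_2\cdots\omega_k\,\Phi^{-k}(c)$, where $\omega_i=\Phi^{-i+1}(\omega)$ for $i\in\{1,\dots,k\}$. Then $d$ is $N$-reduced.
   Context: Let $G$ be a group and $M$ a submonoid with $M\cap M^{-1}=\{1\}$. Define $\alpha\le_L\beta$ iff $\alpha^{-1}\beta\in M$, and $\alpha\le_R\beta$ iff $\beta\alpha^{-1}\in M$. For $a\in M$ let $\mathrm{Div}_L(a)=\{b\in M: b\le_L a\}$, $\mathrm{Div}_R(a)=\{b\in M: b\le_R a\}$; $a$ is balanced if these coincide, and then $\mathrm{Div}(a)$ denotes this set. $M$ is Noetherian if each $a\in M$ admits an $n$ such that $a$ is not a product of more than $n$ non-trivial factors. A Garside structure $(G,M,\Delta)$: $\Delta\in M$ balanced, $M$ Noetherian, $\mathrm{Div}(\Delta)$ finite and generating $M$ as a monoid and $G$ as a group, $(G,\le_L)$ a lattice with meet $\wedge_L$. A parabolic substructure $(H,N,\delta)$: $\delta\in M$ balanced, $H$ (resp. $N$) the subgroup (resp. submonoid) generated by $\mathrm{Div}(\delta)$, and $\mathrm{Div}(\delta)=\mathrm{Div}(\Delta)\cap N$; it is assumed $H\neq\{1\}$. An element $a\in M$ is $N$-reduced if $a\wedge_L\delta=1$, equivalently if the only $b\in N$ with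 $b\le_L a$ is $b=1$. *)

theory Defs
  imports "HOL-Algebra.Algebra"
begin

definition leL :: "('a, 'b) monoid_scheme \<Rightarrow> 'a set \<Rightarrow> 'a \<Rightarrow> 'a \<Rightarrow> bool" where
  "leL G M \<alpha> \<beta> \<longleftrightarrow> inv\<^bsub>G\<^esub> \<alpha> \<otimes>\<^bsub>G\<^esub> \<beta> \<in> M"

definition leR :: "('a, 'b) monoid_scheme \<Rightarrow> 'a set \<Rightarrow> 'a \<Rightarrow> 'a \<Rightarrow> bool" where
  "leR G M \<alpha> \<beta> \<longleftrightarrow> \<beta> \<otimes>\<^bsub>G\<^esub> inv\<^bsub>G\<^esub> \<alpha> \<in> M"

definition DivL :: "('a, 'b) monoid_scheme \<Rightarrow> 'a set \<Rightarrow> 'a \<Rightarrow> 'a set" where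
  "DivL G M a = {b \<in> M. leL G M b a}"

definition DivR :: "('a, 'b) monoid_scheme \<Rightarrow> 'a set \<Rightarrow> 'a \<Rightarrow> 'a set" where
  "DivR G M a = {b \<in> M. leR G M b a}"

definition balanced :: "('a, 'b) monoid_scheme \<Rightarrow> 'a set \<Rightarrow> 'a \<Rightarrow> bool" where
  "balanced G M a \<longleftrightarrow> a \<in> M \<and> DivL G M a = DivR G M a"

text \<open>Div(a), used only for balanced a.\<close>
definition Div :: "('a, 'b) monoid_scheme \<Rightarrow> 'a set \<Rightarrow> 'a \<Rightarrow> 'a set" where
  "Div G M a = DivL G M a"

inductive_set monoid_gen :: "('a, 'b) monoid_scheme \<Rightarrow> 'a set \<Rightarrow> 'a set"
  for G and S where
    one: "\<one>\<^bsub>G\<^esub> \<in> monoid_gen G S"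
  | incl: "s \<in> S \<Longrightarrow> s \<in> monoid_gen G S"
  | mult: "x \<in> monoid_gen G S \<Longrightarrow> y \<in> monoid_gen G S \<Longrightarrow> x \<otimes>\<^bsub>G\<^esub> y \<in> monoid_gen G S"

definition list_prod :: "('a, 'b) monoid_scheme \<Rightarrow> 'a list \<Rightarrow> 'a" where
  "list_prod G xs = foldr (\<lambda>x acc. x \<otimes>\<^bsub>G\<^esub> acc) xs \<one>\<^bsub>G\<^esub>"

definition noetherian :: "('a, 'b) monoid_scheme \<Rightarrow> 'a set \<Rightarrow> bool" where
  "noetherian G M \<longleftrightarrow> (\<forall>a\<in>M. \<exists>n::nat. \<forall>xs. set xs \<subseteq> M - {\<one>\<^bsub>G\<^esub>} \<and> list_prod G xs = a
      \<longrightarrow> length xs \<le> n)"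

definition is_glbL :: "('a, 'b) monoid_scheme \<Rightarrow> 'a set \<Rightarrow> 'a \<Rightarrow> 'a \<Rightarrow> 'a \<Rightarrow> bool" where
  "is_glbL G M a b m \<longleftrightarrow> m \<in> carrier G \<and> leL G M m a \<and> leL G M m b \<and>
     (\<forall>x\<in>carrier G. leL G M x a \<and> leL G M x b \<longrightarrow> leL G M x m)"

definition is_lubL :: "('a, 'b) monoid_scheme \<Rightarrow> 'a set \<Rightarrow> 'a \<Rightarrow> 'a \<Rightarrow> 'a \<Rightarrow> bool" where
  "is_lubL G M a b m \<longleftrightarrow> m \<in> carrier G \<and> leL G M a m \<and> leL G M b m \<and>
     (\<forall>x\<in>carrier G. leL G M a x \<and> leL G M b x \<longrightarrow> leL G M m x)"

definition lattice_L :: "('a, 'b) monoid_scheme \<Rightarrow> 'a set \<Rightarrow> bool" where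
  "lattice_L G M \<longleftrightarrow> (\<forall>a\<in>carrier G. \<forall>b\<in>carrier G.
      (\<exists>m. is_glbL G M a b m) \<and> (\<exists>m. is_lubL G M a b m))"

definition meetL :: "('a, 'b) monoid_scheme \<Rightarrow> 'a set \<Rightarrow> 'a \<Rightarrow> 'a \<Rightarrow> 'a" where
  "meetL G M a b = (THE m. is_glbL G M a b m)"

definition garside_structure :: "('a, 'b) monoid_scheme \<Rightarrow> 'a set \<Rightarrow> 'a \<Rightarrow> bool" where
  "garside_structure G M \<Delta> \<longleftrightarrow>
     group G \<and> submonoid M G \<and> M \<inter> (m_inv G ` M) = {\<one>\<^bsub>G\<^esub>} \<and>
     \<Delta> \<in> M \<and> balanced G M \<Delta> \<and> noetherian G M \<and>
     finite (Div G M \<Delta>) \<and> monoid_gen G (Div G M \<Delta>) = M \<and>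
     generate G (Div G M \<Delta>) = carrier G \<and> lattice_L G M"

definition parabolic_substructure ::
  "('a, 'b) monoid_scheme \<Rightarrow> 'a set \<Rightarrow> 'a \<Rightarrow> 'a set \<Rightarrow> 'a set \<Rightarrow> 'a \<Rightarrow> bool" where
  "parabolic_substructure G M \<Delta> H N \<delta> \<longleftrightarrow>
     \<delta> \<in> M \<and> balanced G M \<delta> \<and>
     H = generate G (Div G M \<delta>) \<and> N = monoid_gen G (Div G M \<delta>) \<and>
     Div G M \<delta> = Div G M \<Delta> \<inter> N \<and> H \<noteq> {\<one>\<^bsub>G\<^esub>}"

definition N_reduced :: "('a, 'b) monoid_scheme \<Rightarrow> 'a set \<Rightarrow> 'a \<Rightarrow> 'a \<Rightarrow> bool" where
  "N_reduced G M \<delta> a \<longleftrightarrow> a \<in> M \<and> meetL G M a \<delta> = \<one>\<^bsub>G\<^esub>"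

definition Phi :: "('a, 'b) monoid_scheme \<Rightarrow> 'a \<Rightarrow> 'a \<Rightarrow> 'a" where
  "Phi G \<Delta> \<alpha> = \<Delta> \<otimes>\<^bsub>G\<^esub> \<alpha> \<otimes>\<^bsub>G\<^esub> inv\<^bsub>G\<^esub> \<Delta>"

definition Phi_inv :: "('a, 'b) monoid_scheme \<Rightarrow> 'a \<Rightarrow> 'a \<Rightarrow> 'a" where
  "Phi_inv G \<Delta> \<alpha> = inv\<^bsub>G\<^esub> \<Delta> \<otimes>\<^bsub>G\<^esub> \<alpha> \<otimes>\<^bsub>G\<^esub> \<Delta>"

end

theory Submission
  imports Defs
begin

context group
begin

lemma canc1 [simp]: "x \<in> carrier G \<Longrightarrow> y \<in> carrier G \<Longrightarrow> x \<otimes> (inv x \<otimes> y) = y"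
  by (simp add: m_assoc[symmetric])

lemma canc2 [simp]: "x \<in> carrier G \<Longrightarrow> y \<in> carrier G \<Longrightarrow> inv x \<otimes> (x \<otimes> y) = y"
  by (simp add: m_assoc[symmetric])

end

locale gs = group G for G (structure) +
  fixes M D
  assumes sub: "submonoid M G"
    and anti: "M \<inter> m_inv G ` M = {\<one>}"
    and bal: "balanced G M D"
    and gen: "monoid_gen G (Div G M D) = M"
    and lat: "lattice_L G M"
begin

lemma Mc [simp]: "x \<in> M \<Longrightarrow> x \<in> carrier G"
  using submonoid.subset[OF sub] by blast

lemma Mm [simp]: "x \<in> M \<Longrightarrow> y \<in> M \<Longrightarrow> x \<otimes> y \<in> M"
  by (rule submonoid.m_closed[OF sub])

lemma M1 [simp]: "\<one> \<in> M"
  by (rule submonoid.one_closed[OF sub])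

lemma anti1: "x \<in> M \<Longrightarrow> inv x \<in> M \<Longrightarrow> x = \<one>"
proof -
  assume a: "x \<in> M" "inv x \<in> M"
  have "inv (inv x) = x" using a by simp
  hence "x \<in> m_inv G ` M" using a by (metis image_eqI)
  thus ?thesis using a anti by blast
qed

lemma DM: "D \<in> M" using bal unfolding balanced_def by blast

lemma Dc [simp]: "D \<in> carrier G" using DM by simp

lemma leL_trans: "x \<in> carrier G \<Longrightarrow> y \<in> carrier G \<Longrightarrow> z \<in> carrier G \<Longrightarrow>
   leL G M x y \<Longrightarrow> leL G M y z \<Longrightarrow> leL G M x z"
  unfolding leL_def
proof -
  assume c: "x \<in> carrier G" "y \<in> carrier G" "z \<in> carrier G"
    and h: "inv x \<otimes> y \<in> M" "inv y \<otimes> z \<in> M"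
  have "(inv x \<otimes> y) \<otimes> (inv y \<otimes> z) = inv x \<otimes> z" using c by (simp add: m_assoc)
  thus "inv x \<otimes> z \<in> M" using h Mm by metis
qed

lemma leL_antisym: "x \<in> carrier G \<Longrightarrow> y \<in> carrier G \<Longrightarrow>
   leL G M x y \<Longrightarrow> leL G M y x \<Longrightarrow> x = y"
  unfolding leL_def
proof -
  assume c: "x \<in> carrier G" "y \<in> carrier G"
    and h: "inv x \<otimes> y \<in> M" "inv y \<otimes> x \<in> M"
  have "inv (inv x \<otimes> y) = inv y \<otimes> x" using c by (simp add: inv_mult_group)
  hence "inv x \<otimes> y = \<one>" using anti1 h by metis
  thus "x = y" using c by (metis canc1 r_one)
qed

lemma leL_left: "g \<in> carrier G \<Longrightarrow> x \<in> carrier G \<Longrightarrow> y \<in> carrier G \<Longrightarrow>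
   leL G M (g \<otimes> x) (g \<otimes> y) = leL G M x y"
  unfolding leL_def by (simp add: inv_mult_group m_assoc)

lemma leL_one: "x \<in> carrier G \<Longrightarrow> leL G M \<one> x = (x \<in> M)"
  unfolding leL_def by simp

lemma leL_M: "x \<in> M \<Longrightarrow> y \<in> M \<Longrightarrow> leL G M x (x \<otimes> y)"
  unfolding leL_def by simp

lemma glb_unique: "is_glbL G M a b m \<Longrightarrow> is_glbL G M a b m' \<Longrightarrow> m = m'"
  unfolding is_glbL_def using leL_antisym by blast

lemma meet_iff: "a \<in> carrier G \<Longrightarrow> b \<in> carrier G \<Longrightarrow>
   (meetL G M a b = m) = is_glbL G M a b m"
proof -
  assume c: "a \<in> carrier G" "b \<in> carrier G"
  obtain m0 where m0: "is_glbL G M a b m0" using lat c unfolding lattice_L_def by blast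
  have "meetL G M a b = m0" unfolding meetL_def
    by (rule the_equality[where P="is_glbL G M a b", OF m0]) (rule glb_unique[OF _ m0])
  thus ?thesis using m0 glb_unique by blast
qed

lemma meet_glb: "a \<in> carrier G \<Longrightarrow> b \<in> carrier G \<Longrightarrow> is_glbL G M a b (meetL G M a b)"
  using meet_iff by blast

lemma lub_ex: "a \<in> carrier G \<Longrightarrow> b \<in> carrier G \<Longrightarrow> \<exists>m. is_lubL G M a b m"
  using lat unfolding lattice_L_def by blast

lemma Div_conj: "s \<in> Div G M D \<Longrightarrow> Phi G D s \<in> M \<and> Phi_inv G D s \<in> M"
proof -
  assume s: "s \<in> Div G M D"
  have sL: "s \<in> DivL G M D" and sR: "s \<in> DivR G M D"
    using s bal unfolding Div_def balanced_def by auto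
  have sM: "s \<in> M" using sL unfolding DivL_def by blast
  have sc: "s \<in> carrier G" using sM by simp
  define t where "t = D \<otimes> inv s"
  have tM: "t \<in> M" using sR unfolding DivR_def leR_def t_def by blast
  have tc: "t \<in> carrier G" using tM by simp
  have "inv t \<otimes> D = s" unfolding t_def using sc by (simp add: inv_mult_group m_assoc)
  hence "t \<in> DivL G M D" using tM sM unfolding DivL_def leL_def by simp
  hence "t \<in> DivR G M D" using bal unfolding balanced_def by blast
  hence "D \<otimes> inv t \<in> M" unfolding DivR_def leR_def by blast
  moreover have "D \<otimes> inv t = Phi G D s" unfolding t_def Phi_def
    using sc by (simp add: inv_mult_group m_assoc)
  ultimately have 1: "Phi G D s \<in> M" by simp
  define u where "u = inv s \<otimes> D"
  have uM: "u \<in> M" using sL unfolding DivL_def leL_def u_def by blast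
  have "D \<otimes> inv u = s" unfolding u_def using sc
    by (simp add: inv_mult_group m_assoc[symmetric])
  hence "u \<in> DivR G M D" using uM sM unfolding DivR_def leR_def by simp
  hence "u \<in> DivL G M D" using bal unfolding balanced_def by blast
  hence "inv u \<otimes> D \<in> M" unfolding DivL_def leL_def by blast
  moreover have "inv u \<otimes> D = Phi_inv G D s" unfolding u_def Phi_inv_def
    using sc by (simp add: inv_mult_group m_assoc)
  ultimately have 2: "Phi_inv G D s \<in> M" by simp
  show ?thesis using 1 2 by blast
qed

lemma Phi_mult: "x \<in> carrier G \<Longrightarrow> y \<in> carrier G \<Longrightarrow> Phi G D (x \<otimes> y) = Phi G D x \<otimes> Phi G D y"
  unfolding Phi_def by (simp add: m_assoc)

lemma Phi_inv_mult: "x \<in> carrier G \<Longrightarrow> y \<in> carrier G \<Longrightarrow> Phi_inv G D (x \<otimes> y) = Phi_inv G D x \<otimes> Phi_inv G D y"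
  unfolding Phi_inv_def by (simp add: m_assoc)

lemma Phi_M: "x \<in> M \<Longrightarrow> Phi G D x \<in> M \<and> Phi_inv G D x \<in> M"
proof -
  assume "x \<in> M"
  hence "x \<in> monoid_gen G (Div G M D)" using gen by simp
  thus ?thesis
  proof (induction rule: monoid_gen.induct)
    case one
    then show ?case unfolding Phi_def Phi_inv_def by simp
  next
    case (incl s)
    then show ?case using Div_conj by blast
  next
    case (mult x y)
    have "x \<in> M" "y \<in> M" using mult.hyps gen by auto
    then show ?case using mult.IH Phi_mult Phi_inv_mult by simp
  qed
qed

lemma Phi_c [simp]: "x \<in> carrier G \<Longrightarrow> Phi G D x \<in> carrier G"
  unfolding Phi_def by simp

lemma Phi_inv_c [simp]: "x \<in> carrier G \<Longrightarrow> Phi_inv G D x \<in> carrier G"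
  unfolding Phi_inv_def by simp

lemma Phi_Phi_inv [simp]: "x \<in> carrier G \<Longrightarrow> Phi G D (Phi_inv G D x) = x"
  unfolding Phi_def Phi_inv_def by (simp add: m_assoc)

lemma Phi_leL: "x \<in> carrier G \<Longrightarrow> y \<in> carrier G \<Longrightarrow> leL G M x y \<Longrightarrow> leL G M (Phi G D x) (Phi G D y)"
proof -
  assume c: "x \<in> carrier G" "y \<in> carrier G" and h: "leL G M x y"
  have "inv (Phi G D x) \<otimes> Phi G D y = Phi G D (inv x \<otimes> y)"
    unfolding Phi_def using c by (simp add: inv_mult_group m_assoc)
  thus ?thesis using h Phi_M unfolding leL_def by simp
qed

lemma Phi_inv_Phi [simp]: "x \<in> carrier G \<Longrightarrow> Phi_inv G D (Phi G D x) = x"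
  unfolding Phi_def Phi_inv_def by (simp add: m_assoc)

lemma core:
  assumes sM: "s \<in> M" and yM: "y \<in> M" and sD: "inv s \<otimes> D \<in> M"
    and hz: "\<And>z. z \<in> M \<Longrightarrow> leL G M z y \<Longrightarrow> leL G M z (inv s \<otimes> D) \<Longrightarrow> z = \<one>"
    and tc: "t \<in> carrier G" and t1: "leL G M t (s \<otimes> y)" and t2: "leL G M t D"
  shows "leL G M t s"
proof -
  have sc: "s \<in> carrier G" and yc: "y \<in> carrier G" using sM yM by auto
  obtain m where m: "is_lubL G M s t m" using lub_ex sc tc by blast
  have mc: "m \<in> carrier G" and sm: "leL G M s m" and tm: "leL G M t m"
    and mu: "\<And>x. x \<in> carrier G \<Longrightarrow> leL G M s x \<Longrightarrow> leL G M t x \<Longrightarrow> leL G M m x"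
    using m unfolding is_lubL_def by auto
  have "leL G M s (s \<otimes> y)" using leL_M sM yM by blast
  hence m1: "leL G M m (s \<otimes> y)" using mu t1 sc yc by simp
  have "leL G M s D" using sD unfolding leL_def by simp
  hence m2: "leL G M m D" using mu t2 by simp
  define z where "z = inv s \<otimes> m"
  have zc: "z \<in> carrier G" unfolding z_def using sc mc by simp
  have mz: "m = s \<otimes> z" unfolding z_def using sc mc by simp
  have zM: "z \<in> M" using sm unfolding leL_def z_def by simp
  have "leL G M z y" using m1 unfolding mz using leL_left sc zc yc by simp
  moreover have "leL G M z (inv s \<otimes> D)"
  proof -
    have "s \<otimes> (inv s \<otimes> D) = D" using sc by simp
    hence "leL G M (s \<otimes> z) (s \<otimes> (inv s \<otimes> D))" using m2 mz by simp
    thus ?thesis using leL_left[of s z "inv s \<otimes> D"] sc zc by simp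
  qed
  ultimately have "z = \<one>" using hz zM by blast
  hence "m = s" using mz sc by simp
  thus ?thesis using tm by simp
qed

lemma step:
  assumes dM: "d \<in> M" and dD: "d \<in> Div G M D"
    and DivN: "Div G M d = Div G M D \<inter> N"
    and Nm: "\<And>x y. x \<in> N \<Longrightarrow> y \<in> N \<Longrightarrow> x \<otimes> y \<in> N"
    and aM: "a \<in> M" and am: "meetL G M a d = \<one>"
  shows "N_reduced G M d (inv d \<otimes> a \<otimes> D)"
proof -
  have dc: "d \<in> carrier G" and ac: "a \<in> carrier G" using dM aM by auto
  define w where "w = inv d \<otimes> D"
  have wM: "w \<in> M" using dD unfolding Div_def DivL_def leL_def w_def by blast
  have wc: "w \<in> carrier G" using wM by simp
  define y where "y = Phi_inv G D a"
  have yM: "y \<in> M" using Phi_M aM y_def by blast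
  have yc: "y \<in> carrier G" using yM by simp
  have eq: "inv d \<otimes> a \<otimes> D = w \<otimes> y" unfolding w_def y_def Phi_inv_def
    using dc ac by (simp add: m_assoc)
  define e where "e = w \<otimes> y"
  have eM: "e \<in> M" unfolding e_def using wM yM by simp
  have ec: "e \<in> carrier G" using eM by simp
  define m where "m = meetL G M e d"
  have mg: "is_glbL G M e d m" unfolding m_def using meet_glb ec dc by blast
  have mc: "m \<in> carrier G" and me: "leL G M m e" and md: "leL G M m d"
    and mu: "\<And>x. x \<in> carrier G \<Longrightarrow> leL G M x e \<Longrightarrow> leL G M x d \<Longrightarrow> leL G M x m"
    using mg unfolding is_glbL_def by auto
  have "leL G M \<one> m" using mu leL_one ec dc eM dM by simp
  hence mM: "m \<in> M" using leL_one mc by simp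
  have mDd: "m \<in> Div G M d" using mM md unfolding Div_def DivL_def by blast
  hence mDD: "m \<in> Div G M D" and mN: "m \<in> N" using DivN by auto
  have mleD: "leL G M m D" using mDD unfolding Div_def DivL_def by blast
  have aglb: "is_glbL G M a d \<one>" using am meet_iff ac dc by blast
  have wD: "inv w \<otimes> D = Phi_inv G D d" unfolding w_def Phi_inv_def
    using dc by (simp add: inv_mult_group m_assoc)
  have hz: "z = \<one>" if zM: "z \<in> M" and z1: "leL G M z y" and z2: "leL G M z (inv w \<otimes> D)" for z
  proof -
    have zc: "z \<in> carrier G" using zM by simp
    have p1: "leL G M (Phi G D z) a" using Phi_leL[OF zc yc z1] unfolding y_def using ac by simp
    have p2: "leL G M (Phi G D z) d" using Phi_leL[OF zc _ z2] unfolding wD using dc by simp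
    have "leL G M (Phi G D z) \<one>" using aglb p1 p2 zc unfolding is_glbL_def by simp
    hence "inv (Phi G D z) \<in> M" unfolding leL_def using zc by simp
    moreover have "Phi G D z \<in> M" using Phi_M zM by blast
    ultimately have "Phi G D z = \<one>" using anti1 by blast
    moreover have "Phi_inv G D \<one> = \<one>" unfolding Phi_inv_def by simp
    ultimately show ?thesis using Phi_inv_Phi zc by metis
  qed
  have "inv w \<otimes> D \<in> M" using wD Phi_M dM by simp
  hence mw: "leL G M m w" using core[OF wM yM _ hz mc _ mleD] me unfolding e_def by blast
  have dDd: "d \<in> Div G M d" using dM dc unfolding Div_def DivL_def leL_def by simp
  hence dN: "d \<in> N" using DivN by blast
  have dmN: "d \<otimes> m \<in> N" using Nm dN mN by blast
  have dmM: "d \<otimes> m \<in> M" using dM mM by simp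
  have "inv (d \<otimes> m) \<otimes> D = inv m \<otimes> w" unfolding w_def using dc mc
    by (simp add: inv_mult_group m_assoc)
  hence "inv (d \<otimes> m) \<otimes> D \<in> M" using mw unfolding leL_def by simp
  hence "d \<otimes> m \<in> Div G M D" using dmM unfolding Div_def DivL_def leL_def by blast
  hence "d \<otimes> m \<in> Div G M d" using DivN dmN by blast
  hence "inv (d \<otimes> m) \<otimes> d \<in> M" unfolding Div_def DivL_def leL_def by blast
  moreover have "inv (d \<otimes> m) \<otimes> d = inv m" using dc mc by (simp add: inv_mult_group m_assoc)
  ultimately have "inv m \<in> M" by simp
  hence "m = \<one>" using anti1[OF mM] by blast
  thus ?thesis unfolding N_reduced_def using eM eq e_def m_def by simp
qed

lemma iter:
  fixes k :: nat
  assumes dM: "d \<in> M" and dD: "d \<in> Div G M D"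
    and DivN: "Div G M d = Div G M D \<inter> N"
    and Nm: "\<And>x y. x \<in> N \<Longrightarrow> y \<in> N \<Longrightarrow> x \<otimes> y \<in> N"
    and c: "N_reduced G M d c"
  shows "N_reduced G M d (inv (d [^] k) \<otimes> c \<otimes> D [^] k)"
proof (induction k)
  case 0
  then show ?case using c unfolding N_reduced_def by simp
next
  case (Suc k)
  have dc: "d \<in> carrier G" and cc: "c \<in> carrier G" using dM c unfolding N_reduced_def by auto
  have "inv (d [^] Suc k) \<otimes> c \<otimes> D [^] Suc k = inv d \<otimes> (inv (d [^] k) \<otimes> c \<otimes> D [^] k) \<otimes> D"
    using dc cc by (simp add: inv_mult_group m_assoc)
  then show ?case using step[OF dM dD DivN Nm] Suc unfolding N_reduced_def by simp
qed

lemma Phi_inv_pow: "x \<in> carrier G \<Longrightarrow> (Phi_inv G D ^^ (j::nat)) x = inv (D [^] j) \<otimes> x \<otimes> D [^] j"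
proof (induction j)
  case 0
  then show ?case by simp
next
  case (Suc j)
  then show ?case unfolding Phi_inv_def
    by (simp add: inv_mult_group m_assoc nat_pow_Suc2[of D j, OF Dc] del: nat_pow_Suc)
qed

end

lemma (in monoid) list_prod_snoc:
  "set xs \<subseteq> carrier G \<Longrightarrow> y \<in> carrier G \<Longrightarrow> list_prod G (xs @ [y]) = list_prod G xs \<otimes> y"
proof (induction xs)
  case Nil
  then show ?case unfolding list_prod_def by simp
next
  case (Cons a xs)
  have "foldr (\<lambda>x acc. x \<otimes> acc) xs \<one> \<in> carrier G"
    using Cons.prems by (induction xs) auto
  then show ?case using Cons unfolding list_prod_def by (simp add: m_assoc)
qed

theorem lemma3p7:
  fixes G (structure) and M H N :: "'a set" and \<Delta> \<delta> c :: 'a and k :: nat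
  assumes "garside_structure G M \<Delta>"
    and "parabolic_substructure G M \<Delta> H N \<delta>"
    and "N_reduced G M \<delta> c"
  shows "N_reduced G M \<delta>
           (list_prod G (map (\<lambda>i. (Phi_inv G \<Delta> ^^ (i - 1)) (inv \<delta> \<otimes> \<Delta>)) [1..<k+1])
              \<otimes> (Phi_inv G \<Delta> ^^ k) c)"
proof -
  have g: "group G" "submonoid M G" "M \<inter> m_inv G ` M = {\<one>}" "balanced G M \<Delta>"
    "monoid_gen G (Div G M \<Delta>) = M" "lattice_L G M"
    using assms(1) unfolding garside_structure_def by blast+
  interpret gs G M \<Delta>
    by (rule gs.intro[OF g(1) gs_axioms.intro[OF g(2-6)]])
  have dM: "\<delta> \<in> M" and DivN: "Div G M \<delta> = Div G M \<Delta> \<inter> N"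
    and Ndef: "N = monoid_gen G (Div G M \<delta>)"
    using assms(2) unfolding parabolic_substructure_def by blast+
  have dc: "\<delta> \<in> carrier G" using dM by simp
  have Nm: "\<And>x y. x \<in> N \<Longrightarrow> y \<in> N \<Longrightarrow> x \<otimes> y \<in> N" unfolding Ndef by (rule monoid_gen.mult)
  have "\<delta> \<in> Div G M \<delta>" using dM dc unfolding Div_def DivL_def leL_def by simp
  hence dD: "\<delta> \<in> Div G M \<Delta>" using DivN by blast
  have cc: "c \<in> carrier G" using assms(3) unfolding N_reduced_def by simp
  have P: "list_prod G (map (\<lambda>i. (Phi_inv G \<Delta> ^^ (i - 1)) (inv \<delta> \<otimes> \<Delta>)) [1..<j+1])
             = inv (\<delta> [^] j) \<otimes> \<Delta> [^] j" for j :: nat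
  proof (induction j)
    case 0
    then show ?case unfolding list_prod_def by simp
  next
    case (Suc j)
    have "set (map (\<lambda>i. (Phi_inv G \<Delta> ^^ (i - 1)) (inv \<delta> \<otimes> \<Delta>)) [1..<j+1]) \<subseteq> carrier G"
      using Phi_inv_pow dc by auto
    hence "list_prod G (map (\<lambda>i. (Phi_inv G \<Delta> ^^ (i - 1)) (inv \<delta> \<otimes> \<Delta>)) [1..<Suc j+1])
        = inv (\<delta> [^] j) \<otimes> \<Delta> [^] j \<otimes> (Phi_inv G \<Delta> ^^ j) (inv \<delta> \<otimes> \<Delta>)"
      using list_prod_snoc Suc.IH Phi_inv_pow dc by simp
    also have "\<dots> = inv (\<delta> [^] Suc j) \<otimes> \<Delta> [^] Suc j"
    proof -
      have c1: "\<delta> \<otimes> \<delta> [^] j = \<delta> [^] j \<otimes> \<delta>"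
        using nat_pow_Suc2[OF dc, of j] by simp
      have c2: "\<Delta> \<otimes> \<Delta> [^] j = \<Delta> [^] j \<otimes> \<Delta>"
        using nat_pow_Suc2[OF Dc, of j] by simp
      have c3: "inv (\<delta> [^] j) \<otimes> inv \<delta> = inv \<delta> \<otimes> inv (\<delta> [^] j)"
        using c1 dc by (metis inv_mult_group nat_pow_closed)
      have "inv (\<delta> [^] j) \<otimes> \<Delta> [^] j \<otimes> (Phi_inv G \<Delta> ^^ j) (inv \<delta> \<otimes> \<Delta>)
          = (inv (\<delta> [^] j) \<otimes> inv \<delta>) \<otimes> (\<Delta> \<otimes> \<Delta> [^] j)"
        using Phi_inv_pow dc by (simp add: m_assoc)
      also have "\<dots> = inv (\<delta> [^] Suc j) \<otimes> \<Delta> [^] Suc j"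
        unfolding c2 c3 using dc by (simp add: inv_mult_group)
      finally show ?thesis .
    qed
    finally show ?case .
  qed
  have eq: "list_prod G (map (\<lambda>i. (Phi_inv G \<Delta> ^^ (i - 1)) (inv \<delta> \<otimes> \<Delta>)) [1..<k+1])
              \<otimes> (Phi_inv G \<Delta> ^^ k) c = inv (\<delta> [^] k) \<otimes> c \<otimes> \<Delta> [^] k"
    unfolding P using Phi_inv_pow cc dc by (simp add: m_assoc)
  show ?thesis unfolding eq by (rule iter[OF dM dD DivN Nm assms(3)])
qed

end
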